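(* Let $b>1$, let $(p,R,I)$ be proper with $I$ non-empty, let $k$ be the greatest divisor of $p$ coprime with $b$ and $d=p/k$. Then: (a) for all distinct $x,x'\in\{0,\ldots,k-1\}$, the states $(xd,\bot)$ and $(x'd,\bot)$ of $\mathcal{C}_{R,p,I}$ are not Nerode-equivalent; (b) the states of $\mathcal{C}_{R,p,I}$ that belong to $0$-circuits are pairwise Nerode-inequivalent; (c) the initial state of $\mathcal{C}_{R,p,I}$ is not Nerode-equivalent to any other state.
   Context: $A_b=\{0,\ldots,b-1\}$. Given $p\ge1$, $R\subseteq\{0,\ldots,p-1\}$, finite $I\subseteq\mathbb{N}$, let $S=(R+p\mathbb{N})\oplus I$ ($\oplus$ = symmetric difference). $(p,R,I)$ is proper if $p$ is the smallest positive integer for which $S=(R'+p\mathbb{N})\oplus I'$ for some $R'\subseteq\{0,\ldots,p-1\}$ and finite $I'$. $\mathcal{A}_{R,p}$: states $\{0,\ldots,p-1\}$, initial $0$, final $R$, transitions $n\xrightarrow{a}(nb+a)\bmod p$. With $m=\max I$, $\mathcal{B}_I$: states $\{0,\ldots,m\}\cup\{\bot\}$, initial $0$, final $I$, transitions $i\xrightarrow{a}ib+a$ if $ib+a\le m$, else $i\xrightarrow{a}\bot$, and $\bot\xrightarrow{a}\bot$. $\mathcal{C}_{R,p,I}$ is the accessible part of the product of $\mathcal{A}_{R,p}$ and $\mathcal{B}_I$ (initial state $(0,0)$, componentwise transitions), with $(s,t)$ final iff exactly one of $s\in R$, $t\in I$ holds. Two states are Nerode-equivalent if for every word $u$, the states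 reached from them by reading $u$ are both final or both non-final. A $0$-circuit is a circuit all of whose transitions are labelled $0$. *)

theory Defs
  imports Main
begin

definition alph :: "nat \<Rightarrow> nat set" where
  "alph b = {0..<b}"

definition symdiff :: "'a set \<Rightarrow> 'a set \<Rightarrow> 'a set" where
  "symdiff A B = (A - B) \<union> (B - A)"

definition perset :: "nat \<Rightarrow> nat set \<Rightarrow> nat set \<Rightarrow> nat set" where
  "perset p R I = symdiff {r + p * n | r n. r \<in> R} I"

definition proper :: "nat \<Rightarrow> nat set \<Rightarrow> nat set \<Rightarrow> bool" where
  "proper p R I \<longleftrightarrow> p \<ge> 1 \<and> R \<subseteq> {0..<p} \<and> finite I \<and>
     (\<forall>p'. 0 < p' \<and> p' < p \<longrightarrow>
        \<not> (\<exists>R' I'. R' \<subseteq> {0..<p'} \<and> finite I' \<and> perset p R I = perset p' R' I'))"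

(* states of the product automaton: (s, t) with t = None standing for \<bottom> *)
type_synonym cstate = "nat \<times> nat option"

definition deltaB :: "nat \<Rightarrow> nat set \<Rightarrow> nat option \<Rightarrow> nat \<Rightarrow> nat option" where
  "deltaB b I t a = (case t of None \<Rightarrow> None
     | Some i \<Rightarrow> (if i * b + a \<le> Max I then Some (i * b + a) else None))"

definition deltaC :: "nat \<Rightarrow> nat \<Rightarrow> nat set \<Rightarrow> cstate \<Rightarrow> nat \<Rightarrow> cstate" where
  "deltaC b p I q a = ((fst q * b + a) mod p, deltaB b I (snd q) a)"

definition runC :: "nat \<Rightarrow> nat \<Rightarrow> nat set \<Rightarrow> cstate \<Rightarrow> nat list \<Rightarrow> cstate" where
  "runC b p I q u = foldl (deltaC b p I) q u"

definition initC :: cstate where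
  "initC = (0, Some 0)"

definition finalC :: "nat set \<Rightarrow> nat set \<Rightarrow> cstate \<Rightarrow> bool" where
  "finalC R I q \<longleftrightarrow> ((fst q \<in> R) \<noteq> (snd q \<in> Some ` I))"

definition statesC :: "nat \<Rightarrow> nat \<Rightarrow> nat set \<Rightarrow> cstate set" where
  "statesC b p I = {runC b p I initC u | u. u \<in> lists (alph b)}"

definition nerode_equiv :: "nat \<Rightarrow> nat \<Rightarrow> nat set \<Rightarrow> nat set \<Rightarrow> cstate \<Rightarrow> cstate \<Rightarrow> bool" where
  "nerode_equiv b p R I q q' \<longleftrightarrow>
     (\<forall>u \<in> lists (alph b). finalC R I (runC b p I q u) = finalC R I (runC b p I q' u))"

definition on_zero_circuit :: "nat \<Rightarrow> nat \<Rightarrow> nat set \<Rightarrow> cstate \<Rightarrow> bool" where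
  "on_zero_circuit b p I q \<longleftrightarrow> (\<exists>n>0. runC b p I q (replicate n 0) = q)"

end

theory Submission
  imports Defs
begin

definition valb :: "nat \<Rightarrow> nat list \<Rightarrow> nat" where
  "valb b u = foldl (\<lambda>n a. n * b + a) 0 u"

lemma valb_snoc[simp]: "valb b (u @ [a]) = valb b u * b + a"
  by (simp add: valb_def)

lemma valb_app: "valb b (w @ u) = valb b w * b ^ length u + valb b u"
proof (induct u rule: rev_induct)
  case Nil then show ?case by (simp add: valb_def)
next
  case (snoc x xs)
  have "valb b (w @ xs @ [x]) = valb b (w @ xs) * b + x"
    using valb_snoc[of b "w @ xs" x] by simp
  then show ?case using snoc by (simp add: algebra_simps)
qed

lemma runC_snoc: "runC b p I q (u @ [a]) = deltaC b p I (runC b p I q u) a"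
  by (simp add: runC_def)

lemma runC_app: "runC b p I q (w @ u) = runC b p I (runC b p I q w) u"
  by (simp add: runC_def)

lemma fst_run:
  assumes "fst q < p"
  shows "fst (runC b p I q u) = (fst q * b ^ length u + valb b u) mod p"
proof (induct u rule: rev_induct)
  case Nil then show ?case using assms by (simp add: runC_def valb_def)
next
  case (snoc x xs)
  have "fst (runC b p I q (xs @ [x])) = (fst (runC b p I q xs) * b + x) mod p"
    by (simp add: runC_snoc deltaC_def)
  also have "\<dots> = (((fst q * b ^ length xs + valb b xs) mod p) * b + x) mod p"
    using snoc by simp
  also have "\<dots> = ((fst q * b ^ length xs + valb b xs) * b + x) mod p"
    by (metis mod_add_left_eq mod_mult_left_eq)
  also have "\<dots> = (fst q * b ^ length (xs @ [x]) + valb b (xs @ [x])) mod p"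
    by (simp add: algebra_simps)
  finally show ?case .
qed

lemma snd_run_none: "snd (runC b p I (s, None) u) = None"
proof (induct u rule: rev_induct)
  case Nil then show ?case by (simp add: runC_def)
next
  case (snoc x xs) then show ?case
    by (simp add: runC_snoc deltaC_def deltaB_def)
qed

lemma snd_run_init:
  assumes "b \<ge> 1"
  shows "snd (runC b p I initC u) = (if valb b u \<le> Max I then Some (valb b u) else None)"
proof (induct u rule: rev_induct)
  case Nil then show ?case by (simp add: runC_def valb_def initC_def)
next
  case (snoc x xs)
  have e: "snd (runC b p I initC (xs @ [x])) = deltaB b I (snd (runC b p I initC xs)) x"
    by (simp add: runC_snoc deltaC_def)
  show ?case
  proof (cases "valb b xs \<le> Max I")
    case True then show ?thesis using e snoc by (simp add: deltaB_def)
  next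
    case False
    have "valb b xs * 1 \<le> valb b xs * b" using assms by (rule mult_le_mono2)
    then have "valb b xs \<le> valb b xs * b + x" by linarith
    then have "valb b xs \<le> valb b (xs @ [x])" by simp
    then have "\<not> valb b (xs @ [x]) \<le> Max I" using False by linarith
    then show ?thesis using e snoc False by (simp add: deltaB_def)
  qed
qed

lemma digits:
  assumes "0 < b" "v < b ^ L"
  shows "\<exists>u \<in> lists (alph b). length u = L \<and> valb b u = v"
  using assms(2)
proof (induct L arbitrary: v)
  case 0 then show ?case by (simp add: valb_def)
next
  case (Suc L)
  have "v div b < b ^ L"
    using Suc.prems by (intro less_mult_imp_div_less) (simp add: mult.commute)
  then obtain u where u: "u \<in> lists (alph b)" "length u = L" "valb b u = v div b"
    using Suc.hyps by blast
  have "u @ [v mod b] \<in> lists (alph b)" using u assms(1) by (simp add: alph_def)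
  moreover have "valb b (u @ [v mod b]) = v" using u by simp
  ultimately show ?case using u by (intro bexI[of _ "u @ [v mod b]"]) auto
qed

lemma lin_set: "(R::nat set) \<subseteq> {0..<p} \<Longrightarrow> {r + p * n | r n. r \<in> R} = {x. x mod p \<in> R}"
proof (intro set_eqI iffI)
  fix x assume a: "R \<subseteq> {0..<p}" "x \<in> {r + p * n | r n. r \<in> R}"
  then obtain r n where rn: "r \<in> R" "x = r + p * n" by blast
  then have "r < p" using a(1) by auto
  then have "x mod p = r" using rn by simp
  then show "x \<in> {x. x mod p \<in> R}" using rn by simp
next
  fix x assume "x \<in> {x. x mod p \<in> R}"
  then show "x \<in> {r + p * n | r n. r \<in> R}"
  proof -
    have "x = x mod p + p * (x div p)" by simp
    then show ?thesis using \<open>x \<in> {x. x mod p \<in> R}\<close> by blast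
  qed
qed

lemma inv_aux:
  assumes pr: "proper p R I" and c: "c0 < c1" "c1 < p"
    and h: "\<forall>r. ((c1 + r) mod p \<in> R) = ((c0 + r) mod p \<in> R)"
  shows False
proof -
  define f where "f r = (r mod p \<in> R)" for r
  have p0: "0 < p" using c by simp
  have per: "f (r + p * y) = f r" for r y by (simp add: f_def)
  define \<delta> where "\<delta> = c1 - c0"
  have d0: "0 < \<delta>" "\<delta> < p" using c by (auto simp: \<delta>_def)
  have s1: "f (r + \<delta>) = f r" for r
  proof -
    have "f (r + \<delta>) = f (r + \<delta> + p * 1)" using per[of "r + \<delta>" 1] by simp
    also have "r + \<delta> + p * 1 = c1 + (r + p - c0)" using c by (simp add: \<delta>_def)
    also have "f \<dots> = f (c0 + (r + p - c0))" using h by (simp add: f_def)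
    also have "c0 + (r + p - c0) = r + p * 1" using c by simp
    also have "f \<dots> = f r" using per[of r 1] by simp
    finally show ?thesis .
  qed
  have s2: "f (r + j * \<delta>) = f r" for j r
  proof (induct j)
    case 0 then show ?case by simp
  next
    case (Suc j)
    have "f (r + Suc j * \<delta>) = f ((r + j * \<delta>) + \<delta>)" by (simp add: algebra_simps)
    then show ?case using s1 Suc by simp
  qed
  define g where "g = gcd \<delta> p"
  obtain x y where xy: "\<delta> * x = p * y + g" using bezout_nat[of \<delta> p] d0 by (auto simp: g_def)
  have g0: "0 < g" using d0 by (simp add: g_def)
  have "g \<le> \<delta>" unfolding g_def by (rule gcd_le1_nat) (use d0 in simp)
  then have gp: "g < p" using d0 by simp
  have s3: "f (r + g) = f r" for r
  proof -
    have "f (r + g) = f (r + g + p * y)" using per[of "r + g" y] by simp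
    also have "r + g + p * y = r + x * \<delta>" using xy by (simp add: algebra_simps)
    finally show ?thesis using s2 by simp
  qed
  have s4: "f (r + g * j) = f r" for j r
  proof (induct j)
    case 0 then show ?case by simp
  next
    case (Suc j)
    have "f (r + g * Suc j) = f ((r + g * j) + g)" by (simp add: algebra_simps)
    then show ?case using s3 Suc by simp
  qed
  have s5: "f n = f (n mod g)" for n
    using s4[of "n mod g" "n div g"] by simp
  define R' where "R' = {r \<in> R. r < g}"
  have R': "R' \<subseteq> {0..<g}" by (auto simp: R'_def)
  have Rp: "R \<subseteq> {0..<p}" "finite I" using pr by (auto simp: proper_def)
  have "{r + p * n | r n. r \<in> R} = {r + g * n | r n. r \<in> R'}"
  proof -
    have "{r + p * n | r n. r \<in> R} = {x. x mod p \<in> R}" using lin_set Rp by blast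
    also have "\<dots> = {x. x mod g \<in> R'}"
    proof (intro set_eqI)
      fix z
      have "(z mod p \<in> R) = f z" by (simp add: f_def)
      also have "\<dots> = f (z mod g)" by (rule s5)
      also have "\<dots> = (z mod g \<in> R)"
        using gp g0 by (simp add: f_def order_less_trans[OF mod_less_divisor[OF g0] gp])
      also have "\<dots> = (z mod g \<in> R')" using g0 by (simp add: R'_def)
      finally show "z \<in> {x. x mod p \<in> R} \<longleftrightarrow> z \<in> {x. x mod g \<in> R'}" by simp
    qed
    also have "\<dots> = {r + g * n | r n. r \<in> R'}" using lin_set[OF R'] by simp
    finally show ?thesis .
  qed
  then have "perset p R I = perset g R' I" by (simp add: perset_def)
  then show False using pr g0 gp R' Rp by (auto simp: proper_def)
qed

lemma shift_inv:
  assumes pr: "proper p R I"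
    and h: "\<forall>r. ((c + r) mod p \<in> R) = ((c' + r) mod p \<in> R)"
  shows "c mod p = c' mod p"
proof (rule ccontr)
  assume ne: "c mod p \<noteq> c' mod p"
  have p0: "0 < p" using pr by (simp add: proper_def)
  have h': "((c mod p + r) mod p \<in> R) = ((c' mod p + r) mod p \<in> R)" for r
    using h by (simp add: mod_add_left_eq)
  show False
  proof (cases "c mod p < c' mod p")
    case True show ?thesis
      by (rule inv_aux[OF pr True mod_less_divisor[OF p0]]) (use h' in simp)
  next
    case False then have "c' mod p < c mod p" using ne by simp
    then show ?thesis
      by (rule inv_aux[OF pr _ mod_less_divisor[OF p0]]) (use h' in simp)
  qed
qed

lemma shift_inv2:
  assumes pr: "proper p R I" and pL: "p \<le> b ^ L"
    and h: "\<forall>v < b ^ L. ((c + v) mod p \<in> R) = ((c' + v) mod p \<in> R)"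
  shows "c mod p = c' mod p"
proof (rule shift_inv[OF pr], intro allI)
  fix r
  have p0: "0 < p" using pr by (simp add: proper_def)
  have "r mod p < b ^ L" using pL mod_less_divisor[OF p0, of r] by linarith
  then have "((c + r mod p) mod p \<in> R) = ((c' + r mod p) mod p \<in> R)" using h by blast
  then show "((c + r) mod p \<in> R) = ((c' + r) mod p \<in> R)" by (simp add: mod_add_right_eq)
qed

lemma nerode_none:
  assumes "nerode_equiv b p R I (s, None) (s', None)" "s < p" "s' < p" "0 < b"
  shows "\<forall>v < b ^ L. ((s * b ^ L + v) mod p \<in> R) = ((s' * b ^ L + v) mod p \<in> R)"
proof (intro allI impI)
  fix v assume "v < b ^ L"
  then obtain u where u: "u \<in> lists (alph b)" "length u = L" "valb b u = v"
    using digits assms(4) by blast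
  have e: "runC b p I (t, None) u = ((t * b ^ L + v) mod p, None)" if "t < p" for t
    using fst_run[of "(t, None)" p b I u] snd_run_none[of b p I t u] that u
    by (metis fst_conv prod.collapse)
  have "finalC R I (runC b p I (s, None) u) = finalC R I (runC b p I (s', None) u)"
    using assms(1) u by (simp add: nerode_equiv_def)
  then show "((s * b ^ L + v) mod p \<in> R) = ((s' * b ^ L + v) mod p \<in> R)"
    using e assms(2,3) by (simp add: finalC_def)
qed

lemma pow_big: "1 < (b::nat) \<Longrightarrow> n < b ^ n"
  by (simp add: power_gt_expt)

lemma key_none:
  assumes pr: "proper p R I" and b: "1 < b" and "s < p" "s' < p"
    and ne: "nerode_equiv b p R I (s, None) (s', None)" and pL: "p \<le> b ^ L"
  shows "s * b ^ L mod p = s' * b ^ L mod p"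
proof -
  have "\<forall>v<b ^ L. ((s * b ^ L + v) mod p \<in> R) = ((s' * b ^ L + v) mod p \<in> R)"
    by (rule nerode_none[OF ne assms(3,4)]) (use b in simp)
  then show ?thesis by (rule shift_inv2[OF pr pL])
qed

lemma init_run:
  assumes "1 \<le> b" "0 < p"
  shows "runC b p I initC u = (valb b u mod p, if valb b u \<le> Max I then Some (valb b u) else None)"
  using fst_run[of initC p b I u] snd_run_init[OF assms(1), of p I u] assms(2)
  by (simp add: initC_def prod_eq_iff)

lemma final_init:
  assumes "1 \<le> b" "0 < p" "finite I"
  shows "finalC R I (runC b p I initC u) = ((valb b u mod p \<in> R) \<noteq> (valb b u \<in> I))"
  using init_run[OF assms(1,2), of I u] assms(3)
  by (auto simp: finalC_def)

lemma part_c: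
  assumes pr: "proper p R I" and b: "1 < b" and I: "I \<noteq> {}"
    and w: "w \<in> lists (alph b)" and q: "runC b p I initC w \<noteq> initC"
  shows "\<not> nerode_equiv b p R I initC (runC b p I initC w)"
proof
  assume ne: "nerode_equiv b p R I initC (runC b p I initC w)"
  have p0: "0 < p" and fI: "finite I" using pr by (auto simp: proper_def)
  define M where "M = Max I"
  define n where "n = valb b w"
  define F where "F x = ((x mod p \<in> R) \<noteq> (x \<in> I))" for x
  have MI: "M \<in> I" using I fI by (simp add: M_def)
  have leM: "x \<in> I \<Longrightarrow> x \<le> M" for x using fI by (simp add: M_def)
  have n0: "n \<noteq> 0"
  proof
    assume "n = 0"
    then have "runC b p I initC w = initC" using init_run[of b p I w] b p0
      by (simp add: n_def initC_def)
    then show False using q by simp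
  qed
  define L where "L = M + p"
  have FF: "F v = F (n * b ^ L + v)" if vL: "v < b ^ L" for v
  proof -
    obtain u where u: "u \<in> lists (alph b)" "length u = L" "valb b u = v"
      using digits[of b v L] vL b by auto
    have "finalC R I (runC b p I initC u) = finalC R I (runC b p I (runC b p I initC w) u)"
      using ne u by (simp add: nerode_equiv_def)
    also have "\<dots> = finalC R I (runC b p I initC (w @ u))" by (simp add: runC_app)
    finally show ?thesis using final_init[of b p I R] b p0 fI u
      by (simp add: F_def valb_app n_def)
  qed
  have bL: "M + p < b ^ L" using pow_big[OF b] by (simp add: L_def)
  have bL1: "1 \<le> b ^ L" using b by simp
  define X where "X = n * b ^ L + M"
  have XM: "M < X"
  proof -
    have "1 * 1 \<le> n * b ^ L" using n0 bL1 by (intro mult_le_mono) auto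
    then show ?thesis unfolding X_def by linarith
  qed
  have 1: "F M = F X" using FF[of M] bL by (simp add: X_def)
  have 2: "F (M + p) = F (X + p)" using FF[of "M + p"] bL by (simp add: X_def add.assoc)
  have "F M = (\<not> (M mod p \<in> R))" using MI by (simp add: F_def)
  moreover have "F (M + p) = (M mod p \<in> R)" using leM[of "M + p"] p0 by (auto simp: F_def)
  moreover have "F X = (X mod p \<in> R)" using leM[of X] XM by (auto simp: F_def)
  moreover have "F (X + p) = (X mod p \<in> R)" using leM[of "X + p"] XM by (auto simp: F_def)
  ultimately show False using 1 2 by simp
qed

lemma nerode_sym: "nerode_equiv b p R I q q' \<Longrightarrow> nerode_equiv b p R I q' q"
  by (simp add: nerode_equiv_def)

lemma pow_mod_iter:
  fixes n b p N :: nat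
  assumes "n * b ^ N mod p = n mod p"
  shows "n * b ^ (N * j) mod p = n mod p"
proof (induct j)
  case 0 then show ?case by simp
next
  case (Suc j)
  have "n * b ^ (N * Suc j) = (n * b ^ N) * b ^ (N * j)" by (simp add: power_add algebra_simps)
  then have "n * b ^ (N * Suc j) mod p = ((n * b ^ N) mod p) * b ^ (N * j) mod p"
    by (metis mod_mult_left_eq)
  also have "\<dots> = (n mod p) * b ^ (N * j) mod p" using assms by simp
  also have "\<dots> = n * b ^ (N * j) mod p" by (metis mod_mult_left_eq)
  also have "\<dots> = n mod p" by (rule Suc)
  finally show ?case .
qed

lemma circuit_shape:
  assumes b: "1 < b" and p0: "0 < p" and w: "w \<in> lists (alph b)"
    and oc: "on_zero_circuit b p I (runC b p I initC w)"
  shows "runC b p I initC w = initC \<or>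
    (\<exists>N>0. Max I < valb b w \<and> valb b w * b ^ N mod p = valb b w mod p \<and>
       runC b p I initC w = (valb b w mod p, None))"
proof -
  obtain N where N: "N > 0" "runC b p I (runC b p I initC w) (replicate N 0) = runC b p I initC w"
    using oc by (auto simp: on_zero_circuit_def)
  define n where "n = valb b w"
  have vr0: "valb b (replicate N 0) = 0"
    unfolding valb_def by (induct N) simp_all
  have vr: "valb b (w @ replicate N 0) = n * b ^ N" by (simp add: valb_app n_def vr0)
  have eq: "runC b p I initC (w @ replicate N 0) = runC b p I initC w"
    using N by (simp add: runC_app)
  have r1: "runC b p I initC (w @ replicate N 0) = (n * b ^ N mod p, if n * b ^ N \<le> Max I then Some (n * b ^ N) else None)"
    using init_run[of b p I "w @ replicate N 0"] b p0 vr by simp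
  have r2: "runC b p I initC w = (n mod p, if n \<le> Max I then Some n else None)"
    using init_run[of b p I w] b p0 by (simp add: n_def)
  have P: "(n * b ^ N mod p, if n * b ^ N \<le> Max I then Some (n * b ^ N) else None) = (n mod p, if n \<le> Max I then Some n else None)"
    using eq r1 r2 by metis
  have e1: "n * b ^ N mod p = n mod p" and
       e2: "(if n * b ^ N \<le> Max I then Some (n * b ^ N) else None) =
            (if n \<le> Max I then Some n else None)"
    using P unfolding prod.inject by blast+
  show ?thesis
  proof (cases "n \<le> Max I")
    case True
    then have "n * b ^ N = n" using e2 by (auto split: if_splits)
    moreover have "1 < b ^ N" using one_less_power[of b N] b N by simp
    ultimately have "n = 0" by (metis mult_cancel1 mult.right_neutral nat_neq_iff)
    then show ?thesis using init_run[of b p I w] b p0 by (simp add: n_def initC_def)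
  next
    case False
    then show ?thesis using e1 N init_run[of b p I w] b p0 by (auto simp: n_def)
  qed
qed

theorem lemma39:
  fixes b p k d :: nat and R I :: "nat set"
  assumes "b > 1"
    and "proper p R I"
    and "I \<noteq> {}"
    and "k = (GREATEST k. k dvd p \<and> coprime k b)"
    and "d = p div k"
  shows "(\<forall>x x'. x < k \<and> x' < k \<and> x \<noteq> x' \<longrightarrow>
            \<not> nerode_equiv b p R I (x * d, None) (x' * d, None))
    \<and> (\<forall>q \<in> statesC b p I. \<forall>q' \<in> statesC b p I.
            on_zero_circuit b p I q \<and> on_zero_circuit b p I q' \<and> q \<noteq> q' \<longrightarrow>
            \<not> nerode_equiv b p R I q q')
    \<and> (\<forall>q \<in> statesC b p I. q \<noteq> initC \<longrightarrow> \<not> nerode_equiv b p R I initC q)"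
proof -
  note b = assms(1) and pr = assms(2)
  have p0: "0 < p" using pr by (simp add: proper_def)
  have pbp: "p \<le> b ^ p" using pow_big[OF b, of p] by simp
  have C: "\<forall>q \<in> statesC b p I. q \<noteq> initC \<longrightarrow> \<not> nerode_equiv b p R I initC q"
  proof (intro ballI impI)
    fix q assume "q \<in> statesC b p I" "q \<noteq> initC"
    then obtain w where "w \<in> lists (alph b)" "q = runC b p I initC w" by (auto simp: statesC_def)
    then show "\<not> nerode_equiv b p R I initC q" using part_c[OF pr b assms(3)] \<open>q \<noteq> initC\<close> by blast
  qed
  have kp: "k dvd p \<and> coprime k b"
    unfolding assms(4)
    by (rule GreatestI_nat[of _ 1 p]) (auto simp: p0 dvd_imp_le)
  have pkd: "p = k * d" using kp assms(5) by simp
  have d0: "0 < d" using pkd p0 by (cases d) auto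
  have A: "\<forall>x x'. x < k \<and> x' < k \<and> x \<noteq> x' \<longrightarrow>
            \<not> nerode_equiv b p R I (x * d, None) (x' * d, None)"
  proof (intro allI impI notI)
    fix x x' assume h: "x < k \<and> x' < k \<and> x \<noteq> x'"
      and ne: "nerode_equiv b p R I (x * d, None) (x' * d, None)"
    have lt: "y < k \<Longrightarrow> y * d < p" for y using pkd d0 by simp
    have E: "x * d * b ^ p mod p = x' * d * b ^ p mod p"
      using key_none[OF pr b lt lt ne pbp] h by simp
    have gen: "False" if "y' < y" "y < k" "y * d * b ^ p mod p = y' * d * b ^ p mod p" for y y'
    proof -
      have "p dvd y * d * b ^ p - y' * d * b ^ p"
        using that mod_eq_dvd_iff_nat[of "y' * d * b ^ p" "y * d * b ^ p" p]
        by (simp add: mult_le_mono1)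
      also have "y * d * b ^ p - y' * d * b ^ p = d * ((y - y') * b ^ p)"
        by (simp add: algebra_simps diff_mult_distrib)
      finally have "k dvd (y - y') * b ^ p" using pkd d0 by (simp add: mult.commute)
      moreover have "coprime k (b ^ p)" using kp by simp
      ultimately have "k dvd y - y'" by (simp add: coprime_dvd_mult_left_iff)
      then have "k \<le> y - y'" using that by (simp add: dvd_imp_le)
      then show False using that by simp
    qed
    show False
    proof (cases "x' < x")
      case True then show ?thesis using gen[OF True] h E by blast
    next
      case False then have "x < x'" using h by simp
      then show ?thesis using gen[of x x'] h E by simp
    qed
  qed
  have B: "\<forall>q \<in> statesC b p I. \<forall>q' \<in> statesC b p I.
            on_zero_circuit b p I q \<and> on_zero_circuit b p I q' \<and> q \<noteq> q' \<longrightarrow>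
            \<not> nerode_equiv b p R I q q'"
  proof (intro ballI impI notI)
    fix q q' assume q: "q \<in> statesC b p I" and q': "q' \<in> statesC b p I"
      and h: "on_zero_circuit b p I q \<and> on_zero_circuit b p I q' \<and> q \<noteq> q'"
      and ne: "nerode_equiv b p R I q q'"
    obtain w where w: "w \<in> lists (alph b)" "q = runC b p I initC w" using q by (auto simp: statesC_def)
    obtain w' where w': "w' \<in> lists (alph b)" "q' = runC b p I initC w'" using q' by (auto simp: statesC_def)
    show False
    proof (cases "q = initC")
      case True then show ?thesis using C q' h ne by auto
    next
      case qn: False
      show ?thesis
      proof (cases "q' = initC")
        case True
        have "nerode_equiv b p R I q' q" using ne by (rule nerode_sym)
        then show ?thesis using C q h True by auto
      next
        case q'n: False
        obtain N where N: "N > 0" "valb b w * b ^ N mod p = valb b w mod p"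
          "q = (valb b w mod p, None)"
          using circuit_shape[OF b p0 w(1)] h w qn by auto
        obtain N' where N': "N' > 0" "valb b w' * b ^ N' mod p = valb b w' mod p"
          "q' = (valb b w' mod p, None)"
          using circuit_shape[OF b p0 w'(1)] h w' q'n by auto
        define n where "n = valb b w"
        define n' where "n' = valb b w'"
        define L where "L = N * N' * p"
        have pL: "p \<le> b ^ L"
        proof -
          have "p \<le> L" using N N' by (simp add: L_def)
          then have "b ^ p \<le> b ^ L" using b by (simp add: power_increasing)
          then show ?thesis using pbp by simp
        qed
        have E: "(n mod p) * b ^ L mod p = (n' mod p) * b ^ L mod p"
          using key_none[OF pr b _ _ _ pL] ne N(3) N'(3) p0 by (simp add: n_def n'_def)
        have "n * b ^ L mod p = n mod p"
          using pow_mod_iter[of n b N p "N' * p"] N(2) by (simp add: L_def n_def mult.assoc)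
        moreover have "n' * b ^ L mod p = n' mod p"
          using pow_mod_iter[of n' b N' p "N * p"] N'(2)
          by (simp add: L_def n'_def mult.commute mult.left_commute)
        ultimately have "n mod p = n' mod p" using E by (simp add: mod_mult_left_eq)
        then show False using h N(3) N'(3) by (simp add: n_def n'_def)
      qed
    qed
  qed
  show ?thesis using A B C by blast
qed

end
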